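(* Let $B \subset \mathbb{R}^3$ be a bounded convex set and let $\hat{P} \in \mathbb{R}^3$ with $\hat{P} \notin \mathrm{cl}(B)$. Then for every $\hat{P}' \in \mathbb{R}^3 \setminus B$: $\hat{P}' \in C^+(B,\hat{P})$ if and only if $\hat{P} \in C^-(B,\hat{P}')$.
   Context: For a bounded convex set $B \subset \mathbb{R}^3$ and a point $Q \in \mathbb{R}^3$ with $Q \notin B$: the positive half-cone $C^+(B,Q)$ is the set of points $Y \in \mathbb{R}^3$ for which there exist $x' \in B$ and $\alpha > 0$ such that $Y - Q = \alpha (Q - x')$. The negative half-cone $C^-(B,Q)$ is the set of points $Y \in \mathbb{R}^3 \setminus \mathrm{cl}(B)$ for which there exist $x' \in B$ and $0 < \alpha < 1$ such that $Y - Q = -\alpha (Q - x')$. Here $\mathrm{cl}(S)$ denotes the topological closure of $S$. *)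

theory Defs
  imports "HOL-Analysis.Analysis"
begin

definition pos_half_cone :: "(real^3) set \<Rightarrow> real^3 \<Rightarrow> (real^3) set" where
  "pos_half_cone B Q = {Y. \<exists>x'\<in>B. \<exists>\<alpha>::real. \<alpha> > 0 \<and> Y - Q = \<alpha> *\<^sub>R (Q - x')}"

definition neg_half_cone :: "(real^3) set \<Rightarrow> real^3 \<Rightarrow> (real^3) set" where
  "neg_half_cone B Q = {Y. Y \<notin> closure B \<and>
     (\<exists>x'\<in>B. \<exists>\<alpha>::real. 0 < \<alpha> \<and> \<alpha> < 1 \<and> Y - Q = - (\<alpha> *\<^sub>R (Q - x')))}"

end

theory Submission
  imports Defs
begin

theorem proposition1:
  fixes B :: "(real^3) set" and P P' :: "real^3"
  assumes "bounded B" and "convex B"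
    and "P \<notin> closure B"
    and "P' \<notin> B"
  shows "P' \<in> pos_half_cone B P \<longleftrightarrow> P \<in> neg_half_cone B P'"
proof
  assume "P' \<in> pos_half_cone B P"
  then obtain x a where x: "x \<in> B" "a > 0" "P' - P = a *\<^sub>R (P - x)"
    unfolding pos_half_cone_def by blast
  define b where "b = a / (a + 1)"
  have b: "0 < b" "b < 1" using x(2) by (auto simp: b_def field_simps)
  have "P' - x = (a + 1) *\<^sub>R (P - x)" using x(3)
    by (simp add: algebra_simps)
  hence "b *\<^sub>R (P' - x) = a *\<^sub>R (P - x)" using x(2) by (simp add: b_def)
  hence "P - P' = - (b *\<^sub>R (P' - x))" using x(3) by (metis minus_diff_eq)
  thus "P \<in> neg_half_cone B P'" using assms(3) x(1) b unfolding neg_half_cone_def by blast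
next
  assume "P \<in> neg_half_cone B P'"
  then obtain x b where x: "x \<in> B" "0 < b" "b < 1" "P - P' = - (b *\<^sub>R (P' - x))"
    unfolding neg_half_cone_def by blast
  define a where "a = b / (1 - b)"
  have a: "a > 0" using x by (simp add: a_def)
  have e1: "P' - P = b *\<^sub>R (P' - x)" using x(4) by (metis minus_diff_eq minus_minus)
  have "P - x = (1 - b) *\<^sub>R (P' - x)" using x(4)
    by (simp add: algebra_simps)
  hence "a *\<^sub>R (P - x) = b *\<^sub>R (P' - x)" using x(3) by (simp add: a_def)
  hence "P' - P = a *\<^sub>R (P - x)" using e1 by simp
  thus "P' \<in> pos_half_cone B P" using x(1) a unfolding pos_half_cone_def by blast
qed

end
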